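(* Let $S=\mathbb{N}_\wedge$ and let $w$ be a weight on $S$. Then $T=\begin{pmatrix}\ell^{1}(S,w)&\ell^{1}(S,w)\\0&\ell^{1}(S,w)\end{pmatrix}$ is not approximately biprojective.
   Context: $\mathbb{N}_\wedge$ is $\mathbb{N}$ with operation $m\wedge n=\min\{m,n\}$. A weight is a function $w:S\to\mathbb{R}^+$ with $w(st)\le w(s)w(t)$; $\ell^1(S,w)=\{f:\sum_s|f(s)|w(s)<\infty\}$ with convolution $\delta_s*\delta_t=\delta_{st}$. For a Banach algebra $A$, $T=\begin{pmatrix}A&A\\0&A\end{pmatrix}$ is the algebra of upper triangular matrices with entries in $A$, matrix operations and norm $\|a\|+\|x\|+\|b\|$. A Banach algebra $B$ is approximately biprojective if there is a net $(\rho_\alpha)$ of continuous $B$-bimodule morphisms $B\to B\otimes_pB$ with $\pi_B\circ\rho_\alpha(b)\to b$ for all $b$, where $\pi_B(b\otimes c)=bc$. *)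

theory Defs
  imports "HOL-Analysis.Analysis"
begin

definition weight :: "(nat \<Rightarrow> real) \<Rightarrow> bool" where
  "weight w \<longleftrightarrow> (\<forall>n. w n > 0) \<and> (\<forall>m n. w (min m n) \<le> w m * w n)"

definition l1 :: "(nat \<Rightarrow> real) \<Rightarrow> (nat \<Rightarrow> complex) \<Rightarrow> bool" where
  "l1 w f \<longleftrightarrow> (\<lambda>n. norm (f n) * w n) summable_on UNIV"

definition l1norm :: "(nat \<Rightarrow> real) \<Rightarrow> (nat \<Rightarrow> complex) \<Rightarrow> real" where
  "l1norm w f = (\<Sum>\<^sub>\<infinity>n. norm (f n) * w n)"

definition conv :: "(nat \<Rightarrow> complex) \<Rightarrow> (nat \<Rightarrow> complex) \<Rightarrow> nat \<Rightarrow> complex" where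
  "conv f g n = (\<Sum>\<^sub>\<infinity>(s,t)\<in>{(s,t). min s t = n}. f s * g t)"

text \<open>An element (a x; 0 b) of T is encoded as a function on pos x nat,
  with a = u(P11,-), x = u(P12,-), b = u(P22,-).\<close>
datatype pos = P11 | P12 | P22

type_synonym tri = "pos \<times> nat \<Rightarrow> complex"

definition entry :: "tri \<Rightarrow> pos \<Rightarrow> nat \<Rightarrow> complex" where
  "entry u i n = u (i, n)"

definition inT :: "(nat \<Rightarrow> real) \<Rightarrow> tri \<Rightarrow> bool" where
  "inT w u \<longleftrightarrow> l1 w (entry u P11) \<and> l1 w (entry u P12) \<and> l1 w (entry u P22)"

definition normT :: "(nat \<Rightarrow> real) \<Rightarrow> tri \<Rightarrow> real" where
  "normT w u = l1norm w (entry u P11) + l1norm w (entry u P12) + l1norm w (entry u P22)"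

text \<open>Matrix product: (a x; 0 b)(a' x'; 0 b') = (aa' , ax' + xb'; 0, bb').\<close>
definition multT :: "tri \<Rightarrow> tri \<Rightarrow> tri" where
  "multT u v = (\<lambda>(i, n). case i of
      P11 \<Rightarrow> conv (entry u P11) (entry v P11) n
    | P12 \<Rightarrow> conv (entry u P11) (entry v P12) n + conv (entry u P12) (entry v P22) n
    | P22 \<Rightarrow> conv (entry u P22) (entry v P22) n)"

definition deltaT :: "pos \<times> nat \<Rightarrow> tri" where
  "deltaT p = (\<lambda>q. if q = p then 1 else 0)"

text \<open>As a Banach space T = l1(pos x nat, v) with v(i,n) = w n, so
  T (x)_p T = l1((pos x nat) x (pos x nat), v (x) v), with u (x) u' corresponding
  to (p,q) |-> u p * u' q.\<close>
type_synonym tens = "(pos \<times> nat) \<times> (pos \<times> nat) \<Rightarrow> complex"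

definition inTT :: "(nat \<Rightarrow> real) \<Rightarrow> tens \<Rightarrow> bool" where
  "inTT w F \<longleftrightarrow> (\<lambda>(p, q). norm (F (p, q)) * w (snd p) * w (snd q)) summable_on UNIV"

definition normTT :: "(nat \<Rightarrow> real) \<Rightarrow> tens \<Rightarrow> real" where
  "normTT w F = (\<Sum>\<^sub>\<infinity>(p, q). norm (F (p, q)) * w (snd p) * w (snd q))"

text \<open>Bimodule actions: a.(u (x) u') = (a u) (x) u', (u (x) u').b = u (x) (u' b);
  i.e. left multiplication on the first factor (columns), right on the second (rows).\<close>
definition lactTT :: "tri \<Rightarrow> tens \<Rightarrow> tens" where
  "lactTT a F = (\<lambda>(p, q). multT a (\<lambda>p'. F (p', q)) p)"

definition ractTT :: "tens \<Rightarrow> tri \<Rightarrow> tens" where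
  "ractTT F b = (\<lambda>(p, q). multT (\<lambda>q'. F (p, q')) b q)"

text \<open>The product map pi(u (x) u') = u u', i.e. pi(F) = sum F(p,q) delta_p delta_q.\<close>
definition piT :: "tens \<Rightarrow> tri" where
  "piT F = (\<lambda>r. \<Sum>\<^sub>\<infinity>(p, q). F (p, q) * multT (deltaT p) (deltaT q) r)"

definition bimod_morph :: "(nat \<Rightarrow> real) \<Rightarrow> (tri \<Rightarrow> tens) \<Rightarrow> bool" where
  "bimod_morph w \<rho> \<longleftrightarrow>
     (\<forall>u. inT w u \<longrightarrow> inTT w (\<rho> u)) \<and>
     (\<forall>u v. inT w u \<longrightarrow> inT w v \<longrightarrow> \<rho> (\<lambda>p. u p + v p) = (\<lambda>z. \<rho> u z + \<rho> v z)) \<and>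
     (\<forall>c u. inT w u \<longrightarrow> \<rho> (\<lambda>p. c * u p) = (\<lambda>z. c * \<rho> u z)) \<and>
     (\<exists>C. \<forall>u. inT w u \<longrightarrow> normTT w (\<rho> u) \<le> C * normT w u) \<and>
     (\<forall>a u. inT w a \<longrightarrow> inT w u \<longrightarrow> \<rho> (multT a u) = lactTT a (\<rho> u)) \<and>
     (\<forall>a u. inT w a \<longrightarrow> inT w u \<longrightarrow> \<rho> (multT u a) = ractTT (\<rho> u) a)"

text \<open>A net (rho_i) of such morphisms, indexed along a proper filter F, with
  pi(rho_i(b)) -> b in T for all b.\<close>
definition approx_biproj_net :: "(nat \<Rightarrow> real) \<Rightarrow> 'i filter \<Rightarrow> ('i \<Rightarrow> tri \<Rightarrow> tens) \<Rightarrow> bool" where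
  "approx_biproj_net w F \<rho> \<longleftrightarrow> F \<noteq> bot \<and> (\<forall>i. bimod_morph w (\<rho> i)) \<and>
     (\<forall>b. inT w b \<longrightarrow> ((\<lambda>i. normT w (\<lambda>r. piT (\<rho> i b) r - b r)) \<longlongrightarrow> 0) F)"

end

theory Submission
  imports Defs
begin

lemma infsum_pt:
  fixes f :: "'a \<Rightarrow> 'b::{comm_monoid_add, t2_space}"
  assumes "\<And>x. x \<in> A \<Longrightarrow> x \<noteq> a \<Longrightarrow> f x = 0" "a \<in> A"
  shows "infsum f A = f a"
proof -
  have "infsum f A = infsum f {a}"
    by (rule infsum_cong_neutral) (use assms in auto)
  then show ?thesis by simp
qed

lemma summable_pt:
  fixes f :: "'a \<Rightarrow> 'b::{comm_monoid_add, topological_space}"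
  assumes "\<And>x. x \<noteq> a \<Longrightarrow> f x = 0"
  shows "f summable_on UNIV"
proof -
  have "f summable_on {a}" by simp
  then show ?thesis
    by (rule summable_on_cong_neutral[THEN iffD1, rotated -1]) (use assms in auto)
qed

lemma conv_0l [simp]: "conv (\<lambda>_. 0) g n = 0"
  unfolding conv_def by (rule infsum_0) auto
lemma conv_0r [simp]: "conv f (\<lambda>_. 0) n = 0"
  unfolding conv_def by (rule infsum_0) auto

lemma conv_dd: "conv (\<lambda>n. if n = 0 then 1 else 0) (\<lambda>n. if n = 0 then 1 else 0) n
   = (if n = 0 then 1 else 0)"
proof (cases "n = 0")
  case True
  have "conv (\<lambda>n. if n = 0 then 1 else 0) (\<lambda>n. if n = 0 then 1 else 0) n
     = (\<lambda>(s,t). (if s = (0::nat) then 1 else 0) * (if t = (0::nat) then 1 else (0::complex))) (0,0)"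
    unfolding conv_def by (rule infsum_pt) (use True in \<open>auto split: if_splits\<close>)
  then show ?thesis using True by simp
next
  case False
  show ?thesis unfolding conv_def using False
    by (simp, intro infsum_0) auto
qed

lemma inT_delta: "inT w (deltaT p)"
  unfolding inT_def l1_def entry_def deltaT_def
  by (intro conjI summable_pt[where a="snd p"]) auto

theorem mainTheorem8:
  fixes w :: "nat \<Rightarrow> real" and F :: "'i filter" and \<rho> :: "'i \<Rightarrow> tri \<Rightarrow> tens"
  assumes "weight w"
  shows "\<not> approx_biproj_net w F \<rho>"
proof
  assume A: "approx_biproj_net w F \<rho>"
  define x where "x = deltaT (P12, 0)"
  define e1 where "e1 = deltaT (P11, 0)"
  define e2 where "e2 = deltaT (P22, 0)"
  have ix: "inT w x" and i1: "inT w e1" and i2: "inT w e2"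
    unfolding x_def e1_def e2_def by (rule inT_delta)+
  have m1: "multT e1 x = x"
    unfolding multT_def x_def e1_def entry_def deltaT_def
    by (auto simp: fun_eq_iff conv_dd split: pos.splits)
  have m2: "multT x e2 = x"
    unfolding multT_def x_def e2_def entry_def deltaT_def
    by (auto simp: fun_eq_iff conv_dd split: pos.splits)
  have pi0: "piT (\<rho> i x) = (\<lambda>_. 0)" for i
  proof -
    have bm: "bimod_morph w (\<rho> i)" using A by (simp add: approx_biproj_net_def)
    have r1: "\<rho> i x = lactTT x (\<rho> i e2)"
      using bm ix i2 m2 unfolding bimod_morph_def by metis
    have r2: "\<rho> i x = ractTT (\<rho> i e1) x"
      using bm ix i1 m1 unfolding bimod_morph_def by metis
    have z1: "\<rho> i x (p, q) = 0" if "fst p \<noteq> P12" for p q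
      using that apply (subst r1) unfolding lactTT_def multT_def x_def entry_def deltaT_def
      by (cases p) (auto split: pos.splits)
    have z2: "\<rho> i x (p, q) = 0" if "fst q \<noteq> P12" for p q
      using that apply (subst r2) unfolding ractTT_def multT_def x_def entry_def deltaT_def
      by (cases q) (auto split: pos.splits)
    have z3: "multT (deltaT p) (deltaT q) r = 0" if "fst p = P12" "fst q = P12" for p q r
      using that unfolding multT_def entry_def deltaT_def
      by (cases p; cases q; cases r) (auto split: pos.splits)
    have z4: "\<rho> i x (p, q) * multT (deltaT p) (deltaT q) r = 0" for p q r
    proof (cases "fst p = P12 \<and> fst q = P12")
      case True then show ?thesis using z3 by simp
    next
      case False
      then have "\<rho> i x (p, q) = 0" using z1[of p q] z2[of q p] by blast
      then show ?thesis by simp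
    qed
    show ?thesis
      unfolding piT_def by (rule ext, rule infsum_0) (auto simp: z4)
  qed
  have nrm: "normT w (\<lambda>r. piT (\<rho> i x) r - x r) = w 0" for i
  proof -
    have "l1norm w (\<lambda>n. - (if n = 0 then 1 else 0)) = (\<lambda>n. norm (- (if n = 0 then 1 else (0::complex))) * w n) 0"
      unfolding l1norm_def by (rule infsum_pt) auto
    then show ?thesis
      unfolding normT_def pi0 unfolding x_def deltaT_def entry_def l1norm_def by simp
  qed
  have "((\<lambda>i. normT w (\<lambda>r. piT (\<rho> i x) r - x r)) \<longlongrightarrow> 0) F"
    using A ix unfolding approx_biproj_net_def by blast
  then have "((\<lambda>i. w 0) \<longlongrightarrow> 0) F" by (simp add: nrm)
  moreover have "F \<noteq> bot" using A by (simp add: approx_biproj_net_def)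
  ultimately have "w 0 = 0" using tendsto_const tendsto_unique by metis
  with assms show False unfolding weight_def by (metis less_irrefl)
qed

end
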